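(* In a pre-Hilbert $*$-category, a morphism $a\colon A\to A$ satisfies $a\succ 0$ if and only if $a=x^*x$ for some object $X$ and some isomorphism $x\colon A\to X$.
   Context: A $*$-category is a category with a choice of $f^*\colon Y\to X$ for each $f\colon X\to Y$ such that $1^*=1$, $(gf)^*=f^*g^*$, $(f^* )^*=f$. A pre-Hilbert $*$-category is a $*$-category with (R1) a zero object, (R2) orthonormal biproducts of all pairs of objects (biproducts $(X,s_1,r_1,s_2,r_2)$ with $r_k=s_k^*$), (R3) an isometric kernel (kernel $m$ with $m^*m=1$) for every morphism, and (R4) every diagonal $\Delta\colon X\to X\oplus X$ a kernel of some morphism; such a category is additive. For a Hermitian endomorphism $a$ ($a^*=a$) of $A$, $a\geq 0$ means $a=y^*y$ for some object $Y$ and $y\colon A\to Y$, and $a\succ 0$ means $a\geq 0$ and $a$ is invertible. *)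

theory Defs
  imports Main
begin

text \<open>A (small) category with involution, represented by its morphism type 'm and
object type 'o. Cmp g f is the composite g after f (meaningful when Cod f = Dom g).\<close>

record ('o, 'm) scat =
  Dom :: "'m \<Rightarrow> 'o"
  Cod :: "'m \<Rightarrow> 'o"
  Cmp :: "'m \<Rightarrow> 'm \<Rightarrow> 'm"
  Idt :: "'o \<Rightarrow> 'm"
  Star :: "'m \<Rightarrow> 'm"

definition in_hom :: "('o, 'm) scat \<Rightarrow> 'm \<Rightarrow> 'o \<Rightarrow> 'o \<Rightarrow> bool" where
  "in_hom C f A B \<longleftrightarrow> Dom C f = A \<and> Cod C f = B"

definition is_category :: "('o, 'm) scat \<Rightarrow> bool" where
  "is_category C \<longleftrightarrow>
     (\<forall>A. in_hom C (Idt C A) A A) \<and>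
     (\<forall>f g. Cod C f = Dom C g \<longrightarrow> in_hom C (Cmp C g f) (Dom C f) (Cod C g)) \<and>
     (\<forall>f. Cmp C f (Idt C (Dom C f)) = f \<and> Cmp C (Idt C (Cod C f)) f = f) \<and>
     (\<forall>f g h. Cod C f = Dom C g \<and> Cod C g = Dom C h \<longrightarrow>
        Cmp C h (Cmp C g f) = Cmp C (Cmp C h g) f)"

definition is_star_category :: "('o, 'm) scat \<Rightarrow> bool" where
  "is_star_category C \<longleftrightarrow> is_category C \<and>
     (\<forall>f. in_hom C (Star C f) (Cod C f) (Dom C f)) \<and>
     (\<forall>A. Star C (Idt C A) = Idt C A) \<and>
     (\<forall>f g. Cod C f = Dom C g \<longrightarrow> Star C (Cmp C g f) = Cmp C (Star C f) (Star C g)) \<and>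
     (\<forall>f. Star C (Star C f) = f)"

definition is_iso :: "('o, 'm) scat \<Rightarrow> 'm \<Rightarrow> bool" where
  "is_iso C x \<longleftrightarrow> (\<exists>y. in_hom C y (Cod C x) (Dom C x) \<and>
      Cmp C y x = Idt C (Dom C x) \<and> Cmp C x y = Idt C (Cod C x))"

definition is_zero_obj :: "('o, 'm) scat \<Rightarrow> 'o \<Rightarrow> bool" where
  "is_zero_obj C Z \<longleftrightarrow> (\<forall>A. (\<exists>!f. in_hom C f A Z) \<and> (\<exists>!f. in_hom C f Z A))"

definition is_zero_mor :: "('o, 'm) scat \<Rightarrow> 'm \<Rightarrow> bool" where
  "is_zero_mor C f \<longleftrightarrow> (\<exists>Z g h. is_zero_obj C Z \<and> in_hom C g (Dom C f) Z \<and>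
      in_hom C h Z (Cod C f) \<and> f = Cmp C h g)"

definition is_product :: "('o, 'm) scat \<Rightarrow> 'o \<Rightarrow> 'm \<Rightarrow> 'm \<Rightarrow> 'o \<Rightarrow> 'o \<Rightarrow> bool" where
  "is_product C X r1 r2 A1 A2 \<longleftrightarrow> in_hom C r1 X A1 \<and> in_hom C r2 X A2 \<and>
     (\<forall>Y f1 f2. in_hom C f1 Y A1 \<and> in_hom C f2 Y A2 \<longrightarrow>
        (\<exists>!u. in_hom C u Y X \<and> Cmp C r1 u = f1 \<and> Cmp C r2 u = f2))"

definition is_coproduct :: "('o, 'm) scat \<Rightarrow> 'o \<Rightarrow> 'm \<Rightarrow> 'm \<Rightarrow> 'o \<Rightarrow> 'o \<Rightarrow> bool" where
  "is_coproduct C X s1 s2 A1 A2 \<longleftrightarrow> in_hom C s1 A1 X \<and> in_hom C s2 A2 X \<and>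
     (\<forall>Y f1 f2. in_hom C f1 A1 Y \<and> in_hom C f2 A2 Y \<longrightarrow>
        (\<exists>!u. in_hom C u X Y \<and> Cmp C u s1 = f1 \<and> Cmp C u s2 = f2))"

definition is_biproduct ::
  "('o, 'm) scat \<Rightarrow> 'o \<Rightarrow> 'm \<Rightarrow> 'm \<Rightarrow> 'm \<Rightarrow> 'm \<Rightarrow> 'o \<Rightarrow> 'o \<Rightarrow> bool" where
  "is_biproduct C X s1 r1 s2 r2 A1 A2 \<longleftrightarrow>
     is_product C X r1 r2 A1 A2 \<and> is_coproduct C X s1 s2 A1 A2 \<and>
     Cmp C r1 s1 = Idt C A1 \<and> Cmp C r2 s2 = Idt C A2 \<and>
     is_zero_mor C (Cmp C r2 s1) \<and> is_zero_mor C (Cmp C r1 s2)"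

definition is_kernel :: "('o, 'm) scat \<Rightarrow> 'm \<Rightarrow> 'm \<Rightarrow> bool" where
  "is_kernel C m f \<longleftrightarrow> Cod C m = Dom C f \<and> is_zero_mor C (Cmp C f m) \<and>
     (\<forall>g. Cod C g = Dom C f \<and> is_zero_mor C (Cmp C f g) \<longrightarrow>
        (\<exists>!u. in_hom C u (Dom C g) (Dom C m) \<and> Cmp C m u = g))"

definition is_pre_hilbert_star_category :: "('o, 'm) scat \<Rightarrow> bool" where
  "is_pre_hilbert_star_category C \<longleftrightarrow> is_star_category C \<and>
     \<comment> \<open>(R1)\<close> (\<exists>Z. is_zero_obj C Z) \<and>
     \<comment> \<open>(R2)\<close> (\<forall>A1 A2. \<exists>X s1 s2. is_biproduct C X s1 (Star C s1) s2 (Star C s2) A1 A2) \<and>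
     \<comment> \<open>(R3)\<close> (\<forall>f. \<exists>m. is_kernel C m f \<and> Cmp C (Star C m) m = Idt C (Dom C m)) \<and>
     \<comment> \<open>(R4)\<close> (\<forall>A Y s1 r1 s2 r2 d. is_biproduct C Y s1 r1 s2 r2 A A \<and> in_hom C d A Y \<and>
                 Cmp C r1 d = Idt C A \<and> Cmp C r2 d = Idt C A \<longrightarrow> (\<exists>f. is_kernel C d f))"

definition is_hermitian :: "('o, 'm) scat \<Rightarrow> 'm \<Rightarrow> bool" where
  "is_hermitian C a \<longleftrightarrow> Star C a = a"

definition is_nonneg :: "('o, 'm) scat \<Rightarrow> 'm \<Rightarrow> bool" where
  "is_nonneg C a \<longleftrightarrow> is_hermitian C a \<and>
     (\<exists>Y y. in_hom C y (Dom C a) Y \<and> a = Cmp C (Star C y) y)"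

definition is_pos_def :: "('o, 'm) scat \<Rightarrow> 'm \<Rightarrow> bool" where
  "is_pos_def C a \<longleftrightarrow> is_nonneg C a \<and> is_iso C a"

end

theory Submission
  imports Defs
begin

locale pstar =
  fixes C :: "('o, 'm) scat"
  assumes ph: "is_pre_hilbert_star_category C"
begin

abbreviation comp (infixr "\<cdot>" 55) where "g \<cdot> f \<equiv> Cmp C g f"
abbreviation st ("_\<^sup>\<star>" [1000] 1000) where "f\<^sup>\<star> \<equiv> Star C f"

lemma sc: "is_star_category C" using ph unfolding is_pre_hilbert_star_category_def by blast
lemma cat: "is_category C" using sc unfolding is_star_category_def by blast

lemma dom_id[simp]: "Dom C (Idt C A) = A" and cod_id[simp]: "Cod C (Idt C A) = A"
  using cat unfolding is_category_def in_hom_def by auto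
lemma dom_comp[simp]: "Cod C f = Dom C g \<Longrightarrow> Dom C (g \<cdot> f) = Dom C f"
  using cat unfolding is_category_def in_hom_def by auto
lemma cod_comp[simp]: "Cod C f = Dom C g \<Longrightarrow> Cod C (g \<cdot> f) = Cod C g"
  using cat unfolding is_category_def in_hom_def by auto
lemma idr[simp]: "Dom C f = A \<Longrightarrow> f \<cdot> Idt C A = f"
  using cat unfolding is_category_def by auto
lemma idl[simp]: "Cod C f = A \<Longrightarrow> Idt C A \<cdot> f = f"
  using cat unfolding is_category_def by auto
lemma assoc: "Cod C f = Dom C g \<Longrightarrow> Cod C g = Dom C h \<Longrightarrow> h \<cdot> (g \<cdot> f) = (h \<cdot> g) \<cdot> f"
  using cat unfolding is_category_def by auto
lemma dom_st[simp]: "Dom C (f\<^sup>\<star>) = Cod C f" and cod_st[simp]: "Cod C (f\<^sup>\<star>) = Dom C f"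
  using sc unfolding is_star_category_def in_hom_def by auto
lemma st_id[simp]: "(Idt C A)\<^sup>\<star> = Idt C A"
  using sc unfolding is_star_category_def by auto
lemma st_st[simp]: "(f\<^sup>\<star>)\<^sup>\<star> = f"
  using sc unfolding is_star_category_def by auto
lemma st_comp: "Cod C f = Dom C g \<Longrightarrow> (g \<cdot> f)\<^sup>\<star> = f\<^sup>\<star> \<cdot> g\<^sup>\<star>"
  using sc unfolding is_star_category_def by auto

lemma R2: "\<exists>X s1 s2. is_biproduct C X s1 (s1\<^sup>\<star>) s2 (s2\<^sup>\<star>) A1 A2"
  using ph unfolding is_pre_hilbert_star_category_def by (elim conjE) (rule spec, rule spec)
lemma R3: "\<exists>m. is_kernel C m f \<and> m\<^sup>\<star> \<cdot> m = Idt C (Dom C m)"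
  using ph unfolding is_pre_hilbert_star_category_def by (elim conjE) (rule spec)
lemma R4: "is_biproduct C Y s1 r1 s2 r2 A A \<Longrightarrow> in_hom C d A Y \<Longrightarrow>
    r1 \<cdot> d = Idt C A \<Longrightarrow> r2 \<cdot> d = Idt C A \<Longrightarrow> \<exists>f. is_kernel C d f"
proof -
  assume a: "is_biproduct C Y s1 r1 s2 r2 A A" "in_hom C d A Y" "r1 \<cdot> d = Idt C A" "r2 \<cdot> d = Idt C A"
  have H: "\<forall>A Y s1 r1 s2 r2 d. is_biproduct C Y s1 r1 s2 r2 A A \<and> in_hom C d A Y \<and>
     Cmp C r1 d = Idt C A \<and> Cmp C r2 d = Idt C A \<longrightarrow> (\<exists>f. is_kernel C d f)"
    using ph unfolding is_pre_hilbert_star_category_def by (elim conjE)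
  show ?thesis using a by (intro H[rule_format] conjI)
qed

lemma zero_comp: "is_zero_mor C f \<Longrightarrow> Cod C k = Dom C f \<Longrightarrow> is_zero_mor C (f \<cdot> k)"
proof -
  assume z: "is_zero_mor C f" and c: "Cod C k = Dom C f"
  have "\<exists>Z g h. is_zero_obj C Z \<and> in_hom C g (Dom C f) Z \<and>
      in_hom C h Z (Cod C f) \<and> f = h \<cdot> g" using z unfolding is_zero_mor_def .
  then obtain Z g h where Z: "is_zero_obj C Z" "in_hom C g (Dom C f) Z"
      "in_hom C h Z (Cod C f)" "f = h \<cdot> g" by blast
  have gh: "Dom C g = Dom C f" "Cod C g = Z" "Dom C h = Z" "Cod C h = Cod C f"
    using Z(2,3) unfolding in_hom_def by auto
  have "f \<cdot> k = h \<cdot> (g \<cdot> k)" unfolding Z(4) using gh c by (simp add: assoc)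
  moreover have "in_hom C (g \<cdot> k) (Dom C (f \<cdot> k)) Z" using gh c by (simp add: in_hom_def)
  moreover have "Cod C (f \<cdot> k) = Cod C f" using gh c by simp
  ultimately show ?thesis unfolding is_zero_mor_def using Z(1,3)
    by (intro exI[of _ Z] exI[of _ "g \<cdot> k"] exI[of _ h] conjI) simp_all
qed

lemma forward:
  assumes aA: "in_hom C a A A" and pd: "is_pos_def C a"
  shows "\<exists>X x. in_hom C x A X \<and> is_iso C x \<and> a = x\<^sup>\<star> \<cdot> x"
proof -
  from pd aA obtain Y y where y: "in_hom C y A Y" and ay: "a = y\<^sup>\<star> \<cdot> y"
    unfolding is_pos_def_def is_nonneg_def in_hom_def by auto
  from pd aA obtain b where b: "in_hom C b A A" "b \<cdot> a = Idt C A" "a \<cdot> b = Idt C A"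
    unfolding is_pos_def_def is_iso_def in_hom_def by auto
  define e where "e = y \<cdot> (b \<cdot> y\<^sup>\<star>)"
  have yd: "Dom C y = A" "Cod C y = Y" using y by (auto simp: in_hom_def)
  have bd: "Dom C b = A" "Cod C b = A" using b by (auto simp: in_hom_def)
  have ed: "Dom C e = Y" "Cod C e = Y" using yd bd by (auto simp: e_def)
  have ey: "e \<cdot> y = y"
  proof -
    have "e \<cdot> y = y \<cdot> (b \<cdot> (y\<^sup>\<star> \<cdot> y))" using yd bd by (simp add: e_def assoc)
    also have "\<dots> = y" using b(2) ay yd by simp
    finally show ?thesis .
  qed
  obtain P s1 s2 where bp: "is_biproduct C P s1 (s1\<^sup>\<star>) s2 (s2\<^sup>\<star>) Y Y"
    using R2 by blast
  have pr: "is_product C P (s1\<^sup>\<star>) (s2\<^sup>\<star>) Y Y" using bp unfolding is_biproduct_def by blast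
  have rd: "Dom C (s1\<^sup>\<star>) = P" "Cod C (s1\<^sup>\<star>) = Y" "Dom C (s2\<^sup>\<star>) = P" "Cod C (s2\<^sup>\<star>) = Y"
    using pr unfolding is_product_def in_hom_def by auto
  have puniq: "\<And>Q f1 f2. in_hom C f1 Q Y \<Longrightarrow> in_hom C f2 Q Y \<Longrightarrow>
      \<exists>!u. in_hom C u Q P \<and> s1\<^sup>\<star> \<cdot> u = f1 \<and> s2\<^sup>\<star> \<cdot> u = f2"
    using pr unfolding is_product_def by blast
  obtain d where d: "in_hom C d Y P" "s1\<^sup>\<star> \<cdot> d = Idt C Y" "s2\<^sup>\<star> \<cdot> d = Idt C Y"
    using puniq[of "Idt C Y" Y "Idt C Y"] by (auto simp: in_hom_def)
  obtain g where g: "is_kernel C d g"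
    using R4[OF bp d] by blast
  obtain p where p: "in_hom C p Y P" "s1\<^sup>\<star> \<cdot> p = Idt C Y" "s2\<^sup>\<star> \<cdot> p = e"
    using puniq[of "Idt C Y" Y e] ed by (auto simp: in_hom_def)
  have dd: "Dom C d = Y" "Cod C d = P" "Dom C p = Y" "Cod C p = P" using d p by (auto simp: in_hom_def)
  have gd: "Dom C g = P" using g dd unfolding is_kernel_def by simp
  define k where "k = g \<cdot> p"
  have kd: "Dom C k = Y" using gd dd by (simp add: k_def)
  obtain m where m: "is_kernel C m k" "m\<^sup>\<star> \<cdot> m = Idt C (Dom C m)"
    using R3 by blast
  define X where "X = Dom C m"
  have md: "Cod C m = Y" "Dom C m = X" using m kd unfolding is_kernel_def X_def by auto
  have gdz: "is_zero_mor C (g \<cdot> d)" using g unfolding is_kernel_def by blast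
  have pyd: "p \<cdot> y = d \<cdot> y"
  proof -
    have "in_hom C (p \<cdot> y) A P \<and> s1\<^sup>\<star> \<cdot> (p \<cdot> y) = y \<and> s2\<^sup>\<star> \<cdot> (p \<cdot> y) = y"
      using dd yd rd p ey by (simp add: in_hom_def assoc)
    moreover have "in_hom C (d \<cdot> y) A P \<and> s1\<^sup>\<star> \<cdot> (d \<cdot> y) = y \<and> s2\<^sup>\<star> \<cdot> (d \<cdot> y) = y"
      using dd yd rd d by (simp add: in_hom_def assoc)
    ultimately show ?thesis using puniq[of y A y] y by blast
  qed
  have kyz: "is_zero_mor C (k \<cdot> y)"
  proof -
    have "k \<cdot> y = g \<cdot> (p \<cdot> y)" unfolding k_def using dd yd gd
      by (simp add: assoc)
    also have "\<dots> = g \<cdot> (d \<cdot> y)" using pyd by simp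
    also have "\<dots> = (g \<cdot> d) \<cdot> y" using dd yd gd by (simp add: assoc)
    finally have "k \<cdot> y = (g \<cdot> d) \<cdot> y" .
    then show ?thesis using zero_comp[OF gdz] dd yd gd by simp
  qed
  obtain x where x: "in_hom C x A X" "m \<cdot> x = y"
  proof -
    have K: "\<forall>g. Cod C g = Dom C k \<and> is_zero_mor C (k \<cdot> g) \<longrightarrow>
        (\<exists>!u. in_hom C u (Dom C g) (Dom C m) \<and> m \<cdot> u = g)"
      using m(1) unfolding is_kernel_def by blast
    have "Cod C y = Dom C k \<and> is_zero_mor C (k \<cdot> y)" using kyz yd kd by simp
    then have "\<exists>!u. in_hom C u (Dom C y) (Dom C m) \<and> m \<cdot> u = y"
      using K by blast
    then show ?thesis using that yd md by blast
  qed
  have xd: "Dom C x = A" "Cod C x = X" using x by (auto simp: in_hom_def)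
  have kmz: "is_zero_mor C (g \<cdot> (p \<cdot> m))"
  proof -
    have "is_zero_mor C (k \<cdot> m)" using m(1) unfolding is_kernel_def by blast
    moreover have "k \<cdot> m = g \<cdot> (p \<cdot> m)" unfolding k_def using dd md gd by (simp add: assoc)
    ultimately show ?thesis by simp
  qed
  obtain u where u: "in_hom C u (Dom C (p \<cdot> m)) (Dom C d)" "d \<cdot> u = p \<cdot> m"
  proof -
    have K: "\<forall>h. Cod C h = Dom C g \<and> is_zero_mor C (g \<cdot> h) \<longrightarrow>
        (\<exists>!u. in_hom C u (Dom C h) (Dom C d) \<and> d \<cdot> u = h)"
      using g unfolding is_kernel_def by blast
    have "Cod C (p \<cdot> m) = Dom C g \<and> is_zero_mor C (g \<cdot> (p \<cdot> m))" using kmz dd md gd by simp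
    then have "\<exists>!u. in_hom C u (Dom C (p \<cdot> m)) (Dom C d) \<and> d \<cdot> u = p \<cdot> m"
      using K by blast
    then show ?thesis using that by blast
  qed
  have ud: "Dom C u = X" "Cod C u = Y" using u dd md by (auto simp: in_hom_def)
  have mu: "m = u"
  proof -
    have "m = (s1\<^sup>\<star> \<cdot> p) \<cdot> m" using p md by simp
    also have "\<dots> = s1\<^sup>\<star> \<cdot> (d \<cdot> u)" using u dd md rd by (simp add: assoc)
    also have "\<dots> = u" using d ud dd rd by (simp add: assoc)
    finally show ?thesis .
  qed
  have em: "e \<cdot> m = m"
  proof -
    have "e \<cdot> m = (s2\<^sup>\<star> \<cdot> p) \<cdot> m" using p by simp
    also have "\<dots> = s2\<^sup>\<star> \<cdot> (d \<cdot> u)" using u dd md rd by (simp add: assoc)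
    also have "\<dots> = u" using d ud dd rd by (simp add: assoc)
    finally show ?thesis using mu by simp
  qed
  have ax: "a = x\<^sup>\<star> \<cdot> x"
  proof -
    have "a = (m \<cdot> x)\<^sup>\<star> \<cdot> (m \<cdot> x)" using ay x by simp
    also have "\<dots> = (x\<^sup>\<star> \<cdot> m\<^sup>\<star>) \<cdot> (m \<cdot> x)" using xd md by (simp add: st_comp)
    also have "\<dots> = x\<^sup>\<star> \<cdot> ((m\<^sup>\<star> \<cdot> m) \<cdot> x)" using xd md by (simp add: assoc)
    also have "\<dots> = x\<^sup>\<star> \<cdot> x" using m(2) md xd by simp
    finally show ?thesis .
  qed
  have xm: "x = m\<^sup>\<star> \<cdot> y"
  proof -
    have "m\<^sup>\<star> \<cdot> y = (m\<^sup>\<star> \<cdot> m) \<cdot> x" using x(2)[symmetric] md xd by (simp add: assoc)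
    then show ?thesis using m(2) md xd by simp
  qed
  have xs: "x\<^sup>\<star> = y\<^sup>\<star> \<cdot> m" using xm md yd by (simp add: st_comp)
  have "is_iso C x"
    unfolding is_iso_def
  proof (intro exI[of _ "b \<cdot> x\<^sup>\<star>"] conjI)
    show "in_hom C (b \<cdot> x\<^sup>\<star>) (Cod C x) (Dom C x)" using bd xd by (simp add: in_hom_def)
    show "(b \<cdot> x\<^sup>\<star>) \<cdot> x = Idt C (Dom C x)"
      using bd xd b ax by (simp add: assoc)
    have "x \<cdot> (b \<cdot> x\<^sup>\<star>) = m\<^sup>\<star> \<cdot> (y \<cdot> (b \<cdot> (y\<^sup>\<star> \<cdot> m)))"
      using xm xs md yd bd by (simp add: assoc)
    also have "\<dots> = m\<^sup>\<star> \<cdot> (e \<cdot> m)" using md yd bd ed by (simp add: e_def assoc)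
    also have "\<dots> = Idt C X" using em m(2) md by simp
    finally show "x \<cdot> (b \<cdot> x\<^sup>\<star>) = Idt C (Cod C x)" using xd by simp
  qed
  then show ?thesis using x(1) ax by (intro exI[of _ X] exI[of _ x] conjI)
qed

lemma backward:
  assumes aA: "in_hom C a A A" and x: "in_hom C x A X" "is_iso C x" "a = x\<^sup>\<star> \<cdot> x"
  shows "is_pos_def C a"
proof -
  have xd: "Dom C x = A" "Cod C x = X" using x by (auto simp: in_hom_def)
  obtain w where w: "in_hom C w X A" "w \<cdot> x = Idt C A" "x \<cdot> w = Idt C X"
    using x(2) xd unfolding is_iso_def by auto
  have wd: "Dom C w = X" "Cod C w = A" using w by (auto simp: in_hom_def)
  have herm: "is_hermitian C a" unfolding is_hermitian_def using x(3) xd by (simp add: st_comp)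
  have nn: "is_nonneg C a" unfolding is_nonneg_def using herm x aA xd
    by (auto simp: in_hom_def)
  have ad: "Dom C a = A" "Cod C a = A" using aA by (auto simp: in_hom_def)
  have "is_iso C a" unfolding is_iso_def
  proof (intro exI[of _ "w \<cdot> w\<^sup>\<star>"] conjI)
    show "in_hom C (w \<cdot> w\<^sup>\<star>) (Cod C a) (Dom C a)" using wd ad by (simp add: in_hom_def)
    have "(w \<cdot> w\<^sup>\<star>) \<cdot> a = w \<cdot> ((x \<cdot> w)\<^sup>\<star> \<cdot> x)" using x(3) xd wd by (simp add: assoc st_comp)
    also have "\<dots> = Idt C A" using w xd by simp
    finally show "(w \<cdot> w\<^sup>\<star>) \<cdot> a = Idt C (Dom C a)" using ad by simp
    have "a \<cdot> (w \<cdot> w\<^sup>\<star>) = x\<^sup>\<star> \<cdot> ((x \<cdot> w) \<cdot> w\<^sup>\<star>)" using x(3) xd wd by (simp add: assoc)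
    also have "\<dots> = x\<^sup>\<star> \<cdot> w\<^sup>\<star>" using w xd wd by simp
    also have "\<dots> = (w \<cdot> x)\<^sup>\<star>" using xd wd st_comp[of x w] by simp
    also have "\<dots> = Idt C A" using w by simp
    finally show "a \<cdot> (w \<cdot> w\<^sup>\<star>) = Idt C (Cod C a)" using ad by simp
  qed
  then show ?thesis using nn unfolding is_pos_def_def by blast
qed

end

theorem proposition6p3:
  fixes C :: "('o, 'm) scat" and a :: 'm and A :: 'o
  assumes "is_pre_hilbert_star_category C"
    and "in_hom C a A A"
  shows "is_pos_def C a \<longleftrightarrow>
    (\<exists>X x. in_hom C x A X \<and> is_iso C x \<and> a = Cmp C (Star C x) x)"
proof -
  interpret pstar C by (unfold_locales) (rule assms(1))
  show ?thesis using forward[OF assms(2)] backward[OF assms(2)] by blast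
qed

end
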